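(* Let $(X,<)$ be a linearly ordered set and $u,v\in\beta X$. Then $$\widetilde{\min}(u,v)=u\iff\widetilde{\max}(u,v)=v\iff \mathrm{supp}(u)<\mathrm{supp}(v)\ \vee\ \mathrm{supp}(u)=\mathrm{supp}(v)=I_u=I_v\ \vee\ u=v,$$ $$\widetilde{\min}(u,v)=v\iff\widetilde{\max}(u,v)=u\iff \mathrm{supp}(v)<\mathrm{supp}(u)\ \vee\ \mathrm{supp}(u)=\mathrm{supp}(v)=J_u=J_v\ \vee\ u=v.$$
   Context: $\beta X$ is the set of ultrafilters over $X$; $\tilde x=\{S\subseteq X:x\in S\}$. For a binary operation $F$ on $X$ (here $\min,\max$), $S\in\tilde F(u,v)\iff\{x\in X:\{y\in X:F(x,y)\in S\}\in v\}\in u$ for all $S\subseteq X$. $I_u=\bigcap\{I\in u: I\text{ initial segment of }X\}$, $J_u=\bigcap\{J\in u: J\text{ final segment of }X\}$; for non-principal $u$ exactly one of $I_u\in u$, $J_u\in u$ holds. Supports: $\mathrm{supp}(\tilde x)=\{x\}$; for non-principal $u$, $\mathrm{supp}(u)$ is $I_u$ regarded as a left half-cut if $I_u\in u$, and $J_u$ regarded as a right half-cut if $J_u\in u$; supports are equal iff of the same kind and equal as sets. "$\mathrm{supp}(u)=\mathrm{supp}(v)=I_u=I_v$" means $u,v$ non-principal, $I_u\in u$, $I_v\in v$, $I_u=I_v$; similarly for $J$. Order on supports: $\{x\}<\{y\}$ iff $x<y$; $\{x\}<I$ iff $x\in I$, $I<\{x\}$ iff $x\notin I$; $\{x\}<J$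 iff $x\notin J$, $J<\{x\}$ iff $x\in J$; $I<I'$ iff $I\subsetneq I'$; $J<J'$ iff $J\supsetneq J'$; $I<J$ iff $I\cap J=\emptyset$, $J<I$ iff $I\cap J\ne\emptyset$. *)

theory Defs
  imports Main
begin

text \<open>The linearly ordered set (X,<) is the universe of a type of class linorder.
  Ultrafilters over X are represented as sets of subsets of X.\<close>

definition ultrafilter :: "'a set set \<Rightarrow> bool" where
  "ultrafilter u \<longleftrightarrow> UNIV \<in> u \<and> {} \<notin> u
     \<and> (\<forall>S T. S \<in> u \<and> S \<subseteq> T \<longrightarrow> T \<in> u)
     \<and> (\<forall>S T. S \<in> u \<and> T \<in> u \<longrightarrow> S \<inter> T \<in> u)
     \<and> (\<forall>S. S \<in> u \<or> - S \<in> u)"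

definition principal :: "'a \<Rightarrow> 'a set set" where
  "principal x = {S. x \<in> S}"

definition nonprincipal :: "'a set set \<Rightarrow> bool" where
  "nonprincipal u \<longleftrightarrow> (\<forall>x. u \<noteq> principal x)"

definition ext2 :: "('a \<Rightarrow> 'a \<Rightarrow> 'a) \<Rightarrow> 'a set set \<Rightarrow> 'a set set \<Rightarrow> 'a set set" where
  "ext2 F u v = {S. {x. {y. F x y \<in> S} \<in> v} \<in> u}"

definition initial_seg :: "('a::linorder) set \<Rightarrow> bool" where
  "initial_seg I \<longleftrightarrow> (\<forall>x y. y \<in> I \<and> x \<le> y \<longrightarrow> x \<in> I)"

definition final_seg :: "('a::linorder) set \<Rightarrow> bool" where
  "final_seg J \<longleftrightarrow> (\<forall>x y. y \<in> J \<and> y \<le> x \<longrightarrow> x \<in> J)"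

definition Iu :: "('a::linorder) set set \<Rightarrow> 'a set" where
  "Iu u = \<Inter>{I \<in> u. initial_seg I}"

definition Ju :: "('a::linorder) set set \<Rightarrow> 'a set" where
  "Ju u = \<Inter>{J \<in> u. final_seg J}"

text \<open>Supports: a point, a left half-cut (an initial segment), or a right half-cut
  (a final segment).\<close>
datatype 'a support = Pt 'a | LCut "'a set" | RCut "'a set"

definition supp :: "('a::linorder) set set \<Rightarrow> 'a support" where
  "supp u = (if \<exists>x. u = principal x then Pt (THE x. u = principal x)
             else if Iu u \<in> u then LCut (Iu u) else RCut (Ju u))"

fun supp_less :: "('a::linorder) support \<Rightarrow> 'a support \<Rightarrow> bool" where
  "supp_less (Pt x) (Pt y) \<longleftrightarrow> x < y"
| "supp_less (Pt x) (LCut I) \<longleftrightarrow> x \<in> I"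
| "supp_less (LCut I) (Pt x) \<longleftrightarrow> x \<notin> I"
| "supp_less (Pt x) (RCut J) \<longleftrightarrow> x \<notin> J"
| "supp_less (RCut J) (Pt x) \<longleftrightarrow> x \<in> J"
| "supp_less (LCut I) (LCut I') \<longleftrightarrow> I \<subset> I'"
| "supp_less (RCut J) (RCut J') \<longleftrightarrow> J' \<subset> J"
| "supp_less (LCut I) (RCut J) \<longleftrightarrow> I \<inter> J = {}"
| "supp_less (RCut J) (LCut I) \<longleftrightarrow> I \<inter> J \<noteq> {}"

end

theory Submission
  imports Defs
begin

lemma uf_univ: "ultrafilter u \<Longrightarrow> UNIV \<in> u" by (simp add: ultrafilter_def)
lemma uf_empty: "ultrafilter u \<Longrightarrow> {} \<notin> u" by (simp add: ultrafilter_def)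
lemma uf_mono: "ultrafilter u \<Longrightarrow> S \<in> u \<Longrightarrow> S \<subseteq> T \<Longrightarrow> T \<in> u" unfolding ultrafilter_def by blast
lemma uf_int: "ultrafilter u \<Longrightarrow> S \<in> u \<Longrightarrow> T \<in> u \<Longrightarrow> S \<inter> T \<in> u" unfolding ultrafilter_def by blast
lemma uf_compl: "ultrafilter u \<Longrightarrow> S \<in> u \<or> - S \<in> u" unfolding ultrafilter_def by blast
lemma uf_ne: "ultrafilter u \<Longrightarrow> S \<in> u \<Longrightarrow> S \<noteq> {}" using uf_empty by blast
lemma uf_compl_iff: "ultrafilter u \<Longrightarrow> (- S \<in> u) = (S \<notin> u)"
  by (metis Compl_disjoint uf_compl uf_empty uf_int)
lemma uf_restrict: "ultrafilter u \<Longrightarrow> W \<in> u \<Longrightarrow> A \<inter> W = B \<inter> W \<Longrightarrow> (A \<in> u) = (B \<in> u)"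
  by (metis Int_lower1 uf_int uf_mono)
lemma uf_if: "ultrafilter u \<Longrightarrow> ((if P then UNIV else {}) \<in> u) = P"
  by (simp add: uf_univ uf_empty)
lemma uf_singleton: assumes "ultrafilter u" "{z} \<in> u" shows "u = principal z"
proof (rule set_eqI)
  fix S show "S \<in> u \<longleftrightarrow> S \<in> principal z"
  proof
    assume "S \<in> u" hence "S \<inter> {z} \<noteq> {}" using assms uf_int uf_ne by blast
    thus "S \<in> principal z" by (auto simp: principal_def)
  next
    assume "S \<in> principal z" thus "S \<in> u" using assms uf_mono[of u "{z}" S] by (auto simp: principal_def)
  qed
qed
lemma principal_inj: "principal a = principal b \<Longrightarrow> a = b"
  unfolding principal_def by (metis mem_Collect_eq singletonD singletonI)
lemma supp_principal: "supp (principal a) = Pt a"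
proof -
  have "(THE x. principal a = principal x) = a" by (rule the_equality) (auto dest: principal_inj)
  thus ?thesis unfolding supp_def by auto
qed
lemma supp_np: "nonprincipal u \<Longrightarrow> supp u = (if Iu u \<in> u then LCut (Iu u) else RCut (Ju u))"
  by (simp add: supp_def nonprincipal_def)

lemma trich: assumes "ultrafilter v" shows "{y. (x::'a::linorder)<y} \<in> v \<or> {y. y<x} \<in> v \<or> {x} \<in> v"
proof -
  have "- {y. x<y} \<inter> - {y. y<x} = {x}" by (auto simp: not_less antisym)
  thus ?thesis using assms uf_compl uf_int by metis
qed

lemma Iu_char: assumes u: "ultrafilter u" and np: "nonprincipal u"
  shows "Iu u = {z. {y. z<y} \<in> u}"
proof (rule set_eqI, rule iffI)
  fix z assume z: "z \<in> Iu u"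
  show "z \<in> {z. {y. z<y} \<in> u}"
  proof (rule ccontr)
    assume "z \<notin> {z. {y. z<y} \<in> u}"
    hence a: "- {y. z<y} \<in> u" using u uf_compl by auto
    have "{y. y<z} \<notin> u"
    proof
      assume "{y. y<z} \<in> u"
      moreover have "initial_seg {y. y<z}" by (auto simp: initial_seg_def)
      ultimately have "z \<in> {y. y<z}" using z by (auto simp: Iu_def)
      thus False by simp
    qed
    hence b: "- {y. y<z} \<in> u" using u uf_compl by auto
    have "- {y. z<y} \<inter> - {y. y<z} = {z}" by auto
    hence "{z} \<in> u" using a b u uf_int by metis
    thus False using np uf_singleton[OF u] unfolding nonprincipal_def by blast
  qed
next
  fix z assume "z \<in> {z. {y. z<y} \<in> u}"
  hence zz: "{y. z<y} \<in> u" by simp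
  show "z \<in> Iu u" unfolding Iu_def
  proof (rule InterI)
    fix A assume A: "A \<in> {I \<in> u. initial_seg I}"
    show "z \<in> A"
    proof (rule ccontr)
      assume "z \<notin> A"
      hence "A \<inter> {y. z<y} = {}" using A by (auto simp: initial_seg_def) (meson less_imp_le)
      thus False using A zz u uf_int uf_empty by fastforce
    qed
  qed
qed

lemma Ju_char: assumes u: "ultrafilter u" and np: "nonprincipal u"
  shows "Ju u = {z. {y. y<z} \<in> u}"
proof (rule set_eqI, rule iffI)
  fix z assume z: "z \<in> Ju u"
  show "z \<in> {z. {y. y<z} \<in> u}"
  proof (rule ccontr)
    assume "z \<notin> {z. {y. y<z} \<in> u}"
    hence a: "- {y. y<z} \<in> u" using u uf_compl by auto
    have "{y. z<y} \<notin> u"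
    proof
      assume "{y. z<y} \<in> u"
      moreover have "final_seg {y. z<y}" by (auto simp: final_seg_def)
      ultimately have "z \<in> {y. z<y}" using z by (auto simp: Ju_def)
      thus False by simp
    qed
    hence b: "- {y. z<y} \<in> u" using u uf_compl by auto
    have "- {y. y<z} \<inter> - {y. z<y} = {z}" by auto
    hence "{z} \<in> u" using a b u uf_int by metis
    thus False using np uf_singleton[OF u] unfolding nonprincipal_def by blast
  qed
next
  fix z assume "z \<in> {z. {y. y<z} \<in> u}"
  hence zz: "{y. y<z} \<in> u" by simp
  show "z \<in> Ju u" unfolding Ju_def
  proof (rule InterI)
    fix A assume A: "A \<in> {J \<in> u. final_seg J}"
    show "z \<in> A"
    proof (rule ccontr)
      assume "z \<notin> A"
      hence "A \<inter> {y. y<z} = {}" using A by (auto simp: final_seg_def) (meson less_imp_le)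
      thus False using A zz u uf_int uf_empty by fastforce
    qed
  qed
qed

lemma Ju_compl: assumes u: "ultrafilter u" and np: "nonprincipal u"
  shows "Ju u = - Iu u"
proof -
  have "\<And>z. {y. y<z} \<in> u \<longleftrightarrow> {y. z<y} \<notin> u"
  proof -
    fix z
    have "{z} \<notin> u" using np uf_singleton[OF u] unfolding nonprincipal_def by blast
    moreover have "{y. y<z} \<inter> {y. z<y} = {}" by auto
    ultimately show "{y. y<z} \<in> u \<longleftrightarrow> {y. z<y} \<notin> u"
      using trich[OF u, of z] u uf_int uf_empty by metis
  qed
  thus ?thesis using Iu_char[OF u np] Ju_char[OF u np] by auto
qed


lemma ext2_eq_u: assumes u: "ultrafilter u" and P: "P \<in> u"
  and h: "\<And>x S. x \<in> P \<Longrightarrow> ({y. F x y \<in> S} \<in> v \<longleftrightarrow> x \<in> S)"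
  shows "ext2 F u v = u"
proof (rule set_eqI)
  fix S
  have "{x. {y. F x y \<in> S} \<in> v} \<inter> P = S \<inter> P" using h by auto
  hence "({x. {y. F x y \<in> S} \<in> v} \<in> u) = (S \<in> u)" by (rule uf_restrict[OF u P])
  thus "S \<in> ext2 F u v \<longleftrightarrow> S \<in> u" unfolding ext2_def by simp
qed

lemma ext2_eq_v: assumes u: "ultrafilter u" and P: "P \<in> u"
  and h: "\<And>x S. x \<in> P \<Longrightarrow> ({y. F x y \<in> S} \<in> v \<longleftrightarrow> S \<in> v)"
  shows "ext2 F u v = v"
proof (rule set_eqI)
  fix S
  have "{x. {y. F x y \<in> S} \<in> v} \<inter> P = (if S \<in> v then UNIV else {}) \<inter> P" using h by auto
  hence "({x. {y. F x y \<in> S} \<in> v} \<in> u) = ((if S \<in> v then UNIV else {}) \<in> u)"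
    by (rule uf_restrict[OF u P])
  thus "S \<in> ext2 F u v \<longleftrightarrow> S \<in> v" unfolding ext2_def using uf_if[OF u] by simp
qed

lemma three:
  fixes u v :: "('a::linorder) set set"
  assumes u: "ultrafilter u" and v: "ultrafilter v"
  defines "P \<equiv> {x. {y. x<y} \<in> v}" and "Q \<equiv> {x. {y. y<x} \<in> v}"
  shows "(P \<in> u \<and> ext2 min u v = u \<and> ext2 max u v = v \<and> Q \<notin> u)
       \<or> (Q \<in> u \<and> ext2 min u v = v \<and> ext2 max u v = u \<and> P \<notin> u)
       \<or> (u = v \<and> ext2 min u v = u \<and> ext2 max u v = u \<and> P \<notin> u \<and> Q \<notin> u)"
proof -
  define R where "R = {x. {x} \<in> v}"
  have disj: "\<And>x. x \<in> P \<Longrightarrow> x \<in> Q \<Longrightarrow> False" "\<And>x. x \<in> P \<Longrightarrow> x \<in> R \<Longrightarrow> False"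
    "\<And>x. x \<in> Q \<Longrightarrow> x \<in> R \<Longrightarrow> False"
  proof -
    fix x :: 'a
    have a: "{y. x<y} \<inter> {y. y<x} = {}" "{y. x<y} \<inter> {x} = {}" "{y. y<x} \<inter> {x} = {}" by auto
    show "x \<in> P \<Longrightarrow> x \<in> Q \<Longrightarrow> False" "x \<in> P \<Longrightarrow> x \<in> R \<Longrightarrow> False"
      "x \<in> Q \<Longrightarrow> x \<in> R \<Longrightarrow> False"
      unfolding P_def Q_def R_def using a v uf_int[OF v] uf_empty[OF v] by force+
  qed
  have PQ: "P \<inter> Q = {}" "P \<inter> R = {}" "Q \<inter> R = {}" using disj by blast+
  have nb: "A \<in> u \<Longrightarrow> B \<in> u \<Longrightarrow> A \<inter> B = {} \<Longrightarrow> False" for A B using uf_int[OF u, of A B] uf_empty[OF u] by simp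
  have cov: "- P \<inter> - Q \<inter> - R = {}" using trich[OF v] unfolding P_def Q_def R_def by auto
  have "P \<in> u \<or> Q \<in> u \<or> R \<in> u"
  proof (rule ccontr)
    assume "\<not> ?thesis"
    hence "- P \<in> u" "- Q \<in> u" "- R \<in> u" using u uf_compl by blast+
    hence "- P \<inter> - Q \<inter> - R \<in> u" using u uf_int by blast
    thus False using cov uf_empty[OF u] by simp
  qed
  moreover
  { assume Pu: "P \<in> u"
    have "ext2 min u v = u"
    proof (rule ext2_eq_u[OF u Pu])
      fix x S assume "x \<in> P"
      hence W: "{y. x<y} \<in> v" by (simp add: P_def)
      have "{y. min x y \<in> S} \<inter> {y. x<y} = (if x \<in> S then UNIV else {}) \<inter> {y. x<y}" by auto
      hence "({y. min x y \<in> S} \<in> v) = ((if x \<in> S then UNIV else {}) \<in> v)" by (rule uf_restrict[OF v W])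
      thus "{y. min x y \<in> S} \<in> v \<longleftrightarrow> x \<in> S" by (simp add: uf_if[OF v])
    qed
    moreover have "ext2 max u v = v"
    proof (rule ext2_eq_v[OF u Pu])
      fix x S assume "x \<in> P"
      hence W: "{y. x<y} \<in> v" by (simp add: P_def)
      have "{y. max x y \<in> S} \<inter> {y. x<y} = S \<inter> {y. x<y}" by auto
      thus "{y. max x y \<in> S} \<in> v \<longleftrightarrow> S \<in> v" by (rule uf_restrict[OF v W])
    qed
    ultimately have ?thesis using Pu nb PQ by blast }
  moreover
  { assume Qu: "Q \<in> u"
    have "ext2 max u v = u"
    proof (rule ext2_eq_u[OF u Qu])
      fix x S assume "x \<in> Q"
      hence W: "{y. y<x} \<in> v" by (simp add: Q_def)
      have "{y. max x y \<in> S} \<inter> {y. y<x} = (if x \<in> S then UNIV else {}) \<inter> {y. y<x}" by auto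
      hence "({y. max x y \<in> S} \<in> v) = ((if x \<in> S then UNIV else {}) \<in> v)" by (rule uf_restrict[OF v W])
      thus "{y. max x y \<in> S} \<in> v \<longleftrightarrow> x \<in> S" by (simp add: uf_if[OF v])
    qed
    moreover have "ext2 min u v = v"
    proof (rule ext2_eq_v[OF u Qu])
      fix x S assume "x \<in> Q"
      hence W: "{y. y<x} \<in> v" by (simp add: Q_def)
      have "{y. min x y \<in> S} \<inter> {y. y<x} = S \<inter> {y. y<x}" by auto
      thus "{y. min x y \<in> S} \<in> v \<longleftrightarrow> S \<in> v" by (rule uf_restrict[OF v W])
    qed
    ultimately have ?thesis using Qu nb PQ by blast }
  moreover
  { assume Ru: "R \<in> u"
    have "ext2 F u v = u" if "\<And>x. F x x = x" for F :: "'a \<Rightarrow> 'a \<Rightarrow> 'a"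
    proof (rule ext2_eq_u[OF u Ru])
      fix x S assume "x \<in> R"
      hence W: "{x} \<in> v" by (simp add: R_def)
      have "{y. F x y \<in> S} \<inter> {x} = (if x \<in> S then UNIV else {}) \<inter> {x}" using that by auto
      hence "({y. F x y \<in> S} \<in> v) = ((if x \<in> S then UNIV else {}) \<in> v)" by (rule uf_restrict[OF v W])
      thus "{y. F x y \<in> S} \<in> v \<longleftrightarrow> x \<in> S" by (simp add: uf_if[OF v])
    qed
    hence e: "ext2 min u v = u" "ext2 max u v = u" by auto
    obtain x where x: "x \<in> R" using Ru u uf_ne by blast
    hence vx: "v = principal x" using uf_singleton[OF v] by (simp add: R_def)
    have "R \<subseteq> {x}"
    proof
      fix z assume "z \<in> R"
      hence "{z} \<in> v" by (simp add: R_def)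
      thus "z \<in> {x}" using vx by (simp add: principal_def)
    qed
    hence "{x} \<in> u" using Ru u uf_mono by blast
    hence "u = v" using vx uf_singleton[OF u] by simp
    hence ?thesis using e Ru nb PQ by blast }
  ultimately show ?thesis by blast
qed


lemma init_sub_lt: "initial_seg I \<Longrightarrow> (I \<subseteq> {x. x<b}) = (b \<notin> I)"
  unfolding initial_seg_def by (auto, meson not_less)
lemma fin_sub_gt: "final_seg J \<Longrightarrow> (J \<subseteq> {x. b<x}) = (b \<notin> J)"
  unfolding final_seg_def by (auto, meson not_less)
lemma fin_lt_int: "final_seg J \<Longrightarrow> (\<forall>z\<in>J. \<exists>j\<in>J. j<z) \<Longrightarrow> ({x. x<b} \<inter> J \<noteq> {}) = (b \<in> J)"
  unfolding final_seg_def by (auto dest: less_imp_le)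
lemma init_gt_int: "initial_seg I \<Longrightarrow> (\<forall>z\<in>I. \<exists>i\<in>I. z<i) \<Longrightarrow> (I \<inter> {x. b<x} \<noteq> {}) = (b \<in> I)"
  unfolding initial_seg_def by (auto dest: less_imp_le)
lemma init_cmp: "initial_seg I \<Longrightarrow> initial_seg I' \<Longrightarrow> (I \<inter> - I' \<noteq> {}) = (I' \<subset> I)"
  unfolding initial_seg_def by (auto, meson linear)
lemma fin_cmp: "final_seg J \<Longrightarrow> final_seg J' \<Longrightarrow> (- J' \<inter> J \<noteq> {}) = (J' \<subset> J)"
  unfolding final_seg_def by (auto, meson linear)

lemma Iu_init: "initial_seg (Iu u)" unfolding Iu_def initial_seg_def by blast
lemma Ju_final: "final_seg (Ju u)" unfolding Ju_def final_seg_def by blast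

lemma kinds: assumes u: "ultrafilter u"
  shows "(\<exists>a. u = principal a) \<or> (nonprincipal u \<and> Iu u \<in> u \<and> Ju u \<notin> u)
       \<or> (nonprincipal u \<and> Iu u \<notin> u \<and> Ju u \<in> u)"
proof (cases "nonprincipal u")
  case True
  thus ?thesis using Ju_compl[OF u True] uf_compl_iff[OF u] by metis
qed (auto simp: nonprincipal_def)

lemma Iu_nomax: assumes u: "ultrafilter u" and np: "nonprincipal u" and I: "Iu u \<in> u"
  shows "\<forall>z\<in>Iu u. \<exists>i\<in>Iu u. z<i"
proof
  fix z assume "z \<in> Iu u"
  hence "{y. z<y} \<in> u" using Iu_char[OF u np] by simp
  hence "{y. z<y} \<inter> Iu u \<noteq> {}" using uf_int[OF u _ I] uf_ne[OF u] by blast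
  thus "\<exists>i\<in>Iu u. z<i" by blast
qed

lemma Ju_nomin: assumes u: "ultrafilter u" and np: "nonprincipal u" and J: "Ju u \<in> u"
  shows "\<forall>z\<in>Ju u. \<exists>j\<in>Ju u. j<z"
proof
  fix z assume "z \<in> Ju u"
  hence "{y. y<z} \<in> u" using Ju_char[OF u np] by simp
  hence "{y. y<z} \<inter> Ju u \<noteq> {}" using uf_int[OF u _ J] uf_ne[OF u] by blast
  thus "\<exists>j\<in>Ju u. j<z" by blast
qed

lemma mem_init_L: assumes u: "ultrafilter u" and I: "Iu u \<in> u" and A: "initial_seg A"
  shows "(A \<in> u) = (Iu u \<subseteq> A)"
  using A uf_mono[OF u I] unfolding Iu_def by blast

lemma mem_fin_R: assumes u: "ultrafilter u" and J: "Ju u \<in> u" and A: "final_seg A"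
  shows "(A \<in> u) = (Ju u \<subseteq> A)"
  using A uf_mono[OF u J] unfolding Ju_def by blast

lemma init_compl: "initial_seg A \<Longrightarrow> final_seg (- A)" unfolding initial_seg_def final_seg_def by blast
lemma fin_compl: "final_seg A \<Longrightarrow> initial_seg (- A)" unfolding initial_seg_def final_seg_def by blast

lemma mem_init_R: assumes u: "ultrafilter u" and J: "Ju u \<in> u" and A: "initial_seg A"
  shows "(A \<in> u) = (A \<inter> Ju u \<noteq> {})"
proof
  assume "A \<in> u" thus "A \<inter> Ju u \<noteq> {}" using uf_int[OF u _ J] uf_ne[OF u] by blast
next
  assume h: "A \<inter> Ju u \<noteq> {}"
  show "A \<in> u"
  proof (rule ccontr)
    assume "A \<notin> u" hence "- A \<in> u" using uf_compl_iff[OF u] by blast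
    hence "Ju u \<subseteq> - A" using mem_fin_R[OF u J init_compl[OF A]] by blast
    thus False using h by blast
  qed
qed

lemma mem_fin_L: assumes u: "ultrafilter u" and I: "Iu u \<in> u" and A: "final_seg A"
  shows "(A \<in> u) = (A \<inter> Iu u \<noteq> {})"
proof
  assume "A \<in> u" thus "A \<inter> Iu u \<noteq> {}" using uf_int[OF u _ I] uf_ne[OF u] by blast
next
  assume h: "A \<inter> Iu u \<noteq> {}"
  show "A \<in> u"
  proof (rule ccontr)
    assume "A \<notin> u" hence "- A \<in> u" using uf_compl_iff[OF u] by blast
    hence "Iu u \<subseteq> - A" using mem_init_L[OF u I fin_compl[OF A]] by blast
    thus False using h by blast
  qed
qed

lemma P_init: "initial_seg {x. {y. x<y} \<in> v}" if v: "ultrafilter v"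
  unfolding initial_seg_def
proof (intro allI impI, elim conjE)
  fix x y :: 'a assume "y \<in> {x. {y. x<y} \<in> v}" "x \<le> y"
  thus "x \<in> {x. {y. x<y} \<in> v}" using uf_mono[OF v] by (auto elim!: uf_mono[OF v])
qed


lemma Q_final: "final_seg {x. {y. y<x} \<in> v}" if v: "ultrafilter v"
  unfolding final_seg_def
proof (intro allI impI, elim conjE)
  fix x y :: 'a assume "y \<in> {x. {y. y<x} \<in> v}" "y \<le> x"
  thus "x \<in> {x. {y. y<x} \<in> v}" by (auto elim!: uf_mono[OF v])
qed

lemma np_principal: "\<not> nonprincipal (principal a)" by (auto simp: nonprincipal_def)

lemma vkinds:
  fixes v :: "('a::linorder) set set"
  assumes v: "ultrafilter v"
  obtains (a) b where "v = principal b" "{x. {y. x<y} \<in> v} = {x. x<b}" "{x. {y. y<x} \<in> v} = {x. b<x}" "supp v = Pt b" "\<not> nonprincipal v"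
  | (b) "nonprincipal v" "Iu v \<in> v" "Ju v \<notin> v" "{x. {y. x<y} \<in> v} = Iu v" "{x. {y. y<x} \<in> v} = - Iu v"
        "supp v = LCut (Iu v)" "\<forall>z\<in>Iu v. \<exists>i\<in>Iu v. z<i"
  | (c) "nonprincipal v" "Iu v \<notin> v" "Ju v \<in> v" "{x. {y. x<y} \<in> v} = - Ju v" "{x. {y. y<x} \<in> v} = Ju v"
        "supp v = RCut (Ju v)" "\<forall>z\<in>Ju v. \<exists>j\<in>Ju v. j<z"
proof -
  from kinds[OF v] consider (a) b where "v = principal b"
    | (b) "nonprincipal v" "Iu v \<in> v" "Ju v \<notin> v" | (c) "nonprincipal v" "Iu v \<notin> v" "Ju v \<in> v"
    by blast
  thus ?thesis
  proof cases
    case a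
    have "{x. {y. x<y} \<in> v} = {x. x<b}" "{x. {y. y<x} \<in> v} = {x. b<x}" using a by (simp_all add: principal_def)
    moreover have "supp v = Pt b" "\<not> nonprincipal v" using a supp_principal np_principal by simp_all
    ultimately show ?thesis using that(1)[OF a] by blast
  next
    case b
    have e: "{x. {y. x<y} \<in> v} = Iu v" "{x. {y. y<x} \<in> v} = - Iu v"
      using Iu_char[OF v b(1)] Ju_char[OF v b(1)] Ju_compl[OF v b(1)] by simp_all
    have "supp v = LCut (Iu v)" using supp_np[OF b(1)] b(2) by simp
    thus ?thesis by (rule that(2)[OF b e _ Iu_nomax[OF v b(1,2)]])
  next
    case c
    have e: "{x. {y. x<y} \<in> v} = - Ju v" "{x. {y. y<x} \<in> v} = Ju v"
      using Iu_char[OF v c(1), symmetric] Ju_char[OF v c(1), symmetric] Ju_compl[OF v c(1)] by simp_all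
    have "supp v = RCut (Ju v)" using supp_np[OF c(1)] c(2) by simp
    thus ?thesis by (rule that(3)[OF c e _ Ju_nomin[OF v c(1,3)]])
  qed
qed

lemma lemC:
  fixes u v :: "('a::linorder) set set"
  assumes u: "ultrafilter u" and v: "ultrafilter v"
  shows "({x. {y. x<y} \<in> v} \<in> u) \<longleftrightarrow> (supp_less (supp u) (supp v)
             \<or> (nonprincipal u \<and> nonprincipal v \<and> Iu u \<in> u \<and> Iu v \<in> v \<and> Iu u = Iu v))"
proof -
  have Pi: "initial_seg {x. {y. x<y} \<in> v}" by (rule P_init[OF v])
  show ?thesis
  using u proof (cases rule: vkinds)
    case (a a)
    note ua = a
    have m: "({x. {y. x<y} \<in> v} \<in> u) = (a \<in> {x. {y. x<y} \<in> v})" using ua(1) by (simp add: principal_def)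
    show ?thesis
    using v proof (cases rule: vkinds)
      case (a b) thus ?thesis using m ua(4,5) by simp
    next
      case b thus ?thesis using m ua(4,5) by simp
    next
      case c thus ?thesis using m ua(4,5) by simp
    qed
  next
    case b
    note ub = b
    have m: "({x. {y. x<y} \<in> v} \<in> u) = (Iu u \<subseteq> {x. {y. x<y} \<in> v})" by (rule mem_init_L[OF u b(2) Pi])
    show ?thesis
    using v proof (cases rule: vkinds)
      case (a b) thus ?thesis using m ub init_sub_lt[OF Iu_init] by simp
    next
      case b thus ?thesis using m ub by (simp add: subset_iff_psubset_eq)
    next
      case c thus ?thesis using m ub by (simp, blast)
    qed
  next
    case c
    note uc = c
    have m: "({x. {y. x<y} \<in> v} \<in> u) = ({x. {y. x<y} \<in> v} \<inter> Ju u \<noteq> {})" by (rule mem_init_R[OF u c(3) Pi])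
    have f: "({x. x<b} \<inter> Ju u \<noteq> {}) = (b \<in> Ju u)" for b
      by (rule fin_lt_int[OF Ju_final uc(7)])
    have g: "(- Ju v \<inter> Ju u \<noteq> {}) = (Ju v \<subset> Ju u)" by (rule fin_cmp[OF Ju_final Ju_final])
    show ?thesis
    using v proof (cases rule: vkinds)
      case (a b) thus ?thesis using m uc f by simp
    next
      case b thus ?thesis using m uc by simp
    next
      case c thus ?thesis using m uc g by simp
    qed
  qed
qed

lemma lemD:
  fixes u v :: "('a::linorder) set set"
  assumes u: "ultrafilter u" and v: "ultrafilter v"
  shows "({x. {y. y<x} \<in> v} \<in> u) \<longleftrightarrow> (supp_less (supp v) (supp u)
             \<or> (nonprincipal u \<and> nonprincipal v \<and> Ju u \<in> u \<and> Ju v \<in> v \<and> Ju u = Ju v))"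
proof -
  have Qf: "final_seg {x. {y. y<x} \<in> v}" by (rule Q_final[OF v])
  show ?thesis
  using u proof (cases rule: vkinds)
    case (a a)
    note ua = a
    have m: "({x. {y. y<x} \<in> v} \<in> u) = (a \<in> {x. {y. y<x} \<in> v})" using ua(1) by (simp add: principal_def)
    show ?thesis
    using v proof (cases rule: vkinds)
      case (a b) thus ?thesis using m ua(4,5) by simp
    next
      case b thus ?thesis using m ua(4,5) by simp
    next
      case c thus ?thesis using m ua(4,5) by simp
    qed
  next
    case b
    note ub = b
    have m: "({x. {y. y<x} \<in> v} \<in> u) = ({x. {y. y<x} \<in> v} \<inter> Iu u \<noteq> {})" by (rule mem_fin_L[OF u b(2) Qf])
    have f: "(Iu u \<inter> {x. b<x} \<noteq> {}) = (b \<in> Iu u)" for b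
      by (rule init_gt_int[OF Iu_init ub(7)])
    have g: "(Iu u \<inter> - Iu v \<noteq> {}) = (Iu v \<subset> Iu u)" by (rule init_cmp[OF Iu_init Iu_init])
    show ?thesis
    using v proof (cases rule: vkinds)
      case (a b) thus ?thesis using m ub f by (simp add: Int_commute)
    next
      case b thus ?thesis using m ub g by (simp add: Int_commute)
    next
      case c thus ?thesis using m ub by (simp add: Int_commute)
    qed
  next
    case c
    note uc = c
    have m: "({x. {y. y<x} \<in> v} \<in> u) = (Ju u \<subseteq> {x. {y. y<x} \<in> v})" by (rule mem_fin_R[OF u c(3) Qf])
    show ?thesis
    using v proof (cases rule: vkinds)
      case (a b) thus ?thesis using m uc fin_sub_gt[OF Ju_final] by simp
    next
      case b thus ?thesis using m uc by (simp, blast)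
    next
      case c thus ?thesis using m uc by (simp add: subset_iff_psubset_eq)
    qed
  qed
qed

theorem corollary4:
  fixes u v :: "('a::linorder) set set"
  assumes "ultrafilter u" and "ultrafilter v"
  shows "(ext2 min u v = u \<longleftrightarrow> ext2 max u v = v)
       \<and> (ext2 max u v = v \<longleftrightarrow>
            (supp_less (supp u) (supp v)
             \<or> (nonprincipal u \<and> nonprincipal v \<and> Iu u \<in> u \<and> Iu v \<in> v \<and> Iu u = Iu v)
             \<or> u = v))
       \<and> (ext2 min u v = v \<longleftrightarrow> ext2 max u v = u)
       \<and> (ext2 max u v = u \<longleftrightarrow>
            (supp_less (supp v) (supp u)
             \<or> (nonprincipal u \<and> nonprincipal v \<and> Ju u \<in> u \<and> Ju v \<in> v \<and> Ju u = Ju v)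
             \<or> u = v))"
proof -
  note C = lemC[OF assms] and D = lemD[OF assms]
  from three[OF assms] consider
      (1) "{x. {y. x<y} \<in> v} \<in> u" "ext2 min u v = u" "ext2 max u v = v" "{x. {y. y<x} \<in> v} \<notin> u"
    | (2) "{x. {y. y<x} \<in> v} \<in> u" "ext2 min u v = v" "ext2 max u v = u" "{x. {y. x<y} \<in> v} \<notin> u"
    | (3) "u = v" "ext2 min u v = u" "ext2 max u v = u" "{x. {y. x<y} \<in> v} \<notin> u" "{x. {y. y<x} \<in> v} \<notin> u"
    by blast
  thus ?thesis
  proof cases
    case 1 thus ?thesis using C D by (smt (verit))
  next
    case 2 thus ?thesis using C D by (smt (verit))
  next
    case 3 thus ?thesis using C D by (smt (verit))
  qed
qed

end
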